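(* Let $\mathfrak g$ be a finite-dimensional complex simple Lie algebra, $\lambda\in P^+$, and $\boldsymbol\lambda=(\lambda_1,\lambda_2),\boldsymbol\mu=(\mu_1,\mu_2)\in P^+(\lambda,2)$ with $\boldsymbol\lambda\prec\boldsymbol\mu$. Suppose there exist $w\in W$ and $i_0\in I$ such that $w(\lambda_1-\lambda_2)\in P^+$ and $$w(\lambda_1-\mu_1)(h_{i_0})\cdot w(\mu_1-\lambda_2)(h_{i_0})>0.$$ Then $(\lambda_1-w^{-1}\omega_{i_0},\ \lambda_2+w^{-1}\omega_{i_0})\in P^+(\lambda,2)$ and $$\boldsymbol\lambda\prec(\lambda_1-w^{-1}\omega_{i_0},\ \lambda_2+w^{-1}\omega_{i_0})\preceq\boldsymbol\mu.$$
   Context: $\mathfrak g$ has simple roots $\alpha_i$ ($i\in I$), fundamental weights $\omega_i$, positive roots $R^+$, coroots $h_\alpha$, $h_i=h_{\alpha_i}$, Weyl group $W$, dominant integral weights $P^+$. $P^+(\lambda,2)=\{(\lambda_1,\lambda_2)\in(P^+)^2:\lambda_1+\lambda_2=\lambda\}$; $(\lambda_1,\lambda_2)\preceq(\mu_1,\mu_2)$ means $\min\{\lambda_1(h_\alpha),\lambda_2(h_\alpha)\}\le\min\{\mu_1(h_\alpha),\mu_2(h_\alpha)\}$ for all $\alpha\in R^+$; $\sim$ means equality of these minima for all $\alpha\in R^+$; $\boldsymbol\lambda\prec\boldsymbol\mu$ means $\boldsymbol\lambda\preceq\boldsymbol\mu$ and not $\boldsymbol\lambda\sim\boldsymbol\mu$.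 *)

theory Defs
  imports "HOL-Analysis.Analysis"
begin

text \<open>Root-system model of a finite-dimensional complex simple Lie algebra g:
  weights live in a real Euclidean space 'a (the real span of the roots, with a
  Weyl-group invariant inner product); the root system R of g is a finite,
  reduced, crystallographic, irreducible root system spanning 'a.
  For a weight x and a root a, x(h_a) = 2 (x . a) / (a . a).\<close>

definition pair :: "'a::real_inner \<Rightarrow> 'a \<Rightarrow> real" where
  "pair x a = 2 * (x \<bullet> a) / (a \<bullet> a)"

definition refl :: "'a::real_inner \<Rightarrow> 'a \<Rightarrow> 'a" where
  "refl a x = x - pair x a *\<^sub>R a"

definition root_system :: "'a::euclidean_space set \<Rightarrow> bool" where
  "root_system R \<longleftrightarrow> finite R \<and> 0 \<notin> R \<and> span R = UNIV \<and>
     (\<forall>a\<in>R. \<forall>b\<in>R. refl a b \<in> R \<and> pair b a \<in> \<int>) \<and>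
     (\<forall>a\<in>R. \<forall>c. c *\<^sub>R a \<in> R \<longrightarrow> c = 1 \<or> c = -1)"

definition irreducible_rs :: "'a::euclidean_space set \<Rightarrow> bool" where
  "irreducible_rs R \<longleftrightarrow> \<not> (\<exists>A B. A \<noteq> {} \<and> B \<noteq> {} \<and> A \<union> B = R \<and> A \<inter> B = {} \<and>
       (\<forall>a\<in>A. \<forall>b\<in>B. a \<bullet> b = 0))"

text \<open>A base (set of simple roots) of R; the index set I is identified with the base.\<close>
definition is_base :: "'a::euclidean_space set \<Rightarrow> 'a set \<Rightarrow> bool" where
  "is_base R S \<longleftrightarrow> S \<subseteq> R \<and> independent S \<and>
     (\<forall>b\<in>R. \<exists>c. b = (\<Sum>a\<in>S. c a *\<^sub>R a) \<and>
        ((\<forall>a\<in>S. c a \<in> \<nat>) \<or> (\<forall>a\<in>S. - c a \<in> \<nat>)))"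

definition pos_roots :: "'a::euclidean_space set \<Rightarrow> 'a set \<Rightarrow> 'a set" where
  "pos_roots R S = {b\<in>R. \<exists>c. b = (\<Sum>a\<in>S. c a *\<^sub>R a) \<and> (\<forall>a\<in>S. c a \<in> \<nat>)}"

definition fund_weight :: "'a::euclidean_space set \<Rightarrow> 'a \<Rightarrow> 'a" where
  "fund_weight S i = (THE w. \<forall>j\<in>S. pair w j = (if j = i then 1 else 0))"

definition dominant :: "'a::euclidean_space set \<Rightarrow> 'a \<Rightarrow> bool" where
  "dominant S x \<longleftrightarrow> (\<forall>a\<in>S. pair x a \<in> \<nat>)"

inductive_set weyl_group :: "'a::euclidean_space set \<Rightarrow> ('a \<Rightarrow> 'a) set" for R where
  weyl_id: "id \<in> weyl_group R"
| weyl_step: "w \<in> weyl_group R \<Longrightarrow> a \<in> R \<Longrightarrow> refl a \<circ> w \<in> weyl_group R"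

definition P2 :: "'a::euclidean_space set \<Rightarrow> 'a \<Rightarrow> ('a \<times> 'a) set" where
  "P2 S l = {(l1, l2). dominant S l1 \<and> dominant S l2 \<and> l1 + l2 = l}"

definition pmin :: "'a::euclidean_space \<times> 'a \<Rightarrow> 'a \<Rightarrow> real" where
  "pmin p a = min (pair (fst p) a) (pair (snd p) a)"

definition preceq :: "'a::euclidean_space set \<Rightarrow> 'a set \<Rightarrow> 'a \<times> 'a \<Rightarrow> 'a \<times> 'a \<Rightarrow> bool" where
  "preceq R S p q \<longleftrightarrow> (\<forall>a\<in>pos_roots R S. pmin p a \<le> pmin q a)"

definition simeq :: "'a::euclidean_space set \<Rightarrow> 'a set \<Rightarrow> 'a \<times> 'a \<Rightarrow> 'a \<times> 'a \<Rightarrow> bool" where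
  "simeq R S p q \<longleftrightarrow> (\<forall>a\<in>pos_roots R S. pmin p a = pmin q a)"

definition prec :: "'a::euclidean_space set \<Rightarrow> 'a set \<Rightarrow> 'a \<times> 'a \<Rightarrow> 'a \<times> 'a \<Rightarrow> bool" where
  "prec R S p q \<longleftrightarrow> preceq R S p q \<and> \<not> simeq R S p q"

end

theory Submission
  imports Defs
begin

lemma pair_add: "pair (x + y) a = pair x a + pair y a"
  unfolding pair_def by (simp add: inner_add_left add_divide_distrib)
lemma pair_diff: "pair (x - y) a = pair x a - pair y a"
  unfolding pair_def by (simp add: inner_diff_left diff_divide_distrib)
lemma pair_scale: "pair (t *\<^sub>R x) a = t * pair x a"
  unfolding pair_def by simp
lemma pair_uminus: "pair (- x) a = - pair x a"
  unfolding pair_def by simp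
lemma pair_uminus_right: "pair x (- a) = - pair x a"
  unfolding pair_def by simp
lemma pair_self: "a \<noteq> 0 \<Longrightarrow> pair a a = 2"
  unfolding pair_def by simp
lemma inner_pair: "a \<noteq> 0 \<Longrightarrow> x \<bullet> a = pair x a * (a \<bullet> a) / 2"
  unfolding pair_def by simp

lemma pmin_eq: "pmin (p, q) a = (pair (p + q) a - \<bar>pair (p - q) a\<bar>) / 2"
  unfolding pmin_def by (simp add: pair_add pair_diff min_def abs_if)

lemma refl_linear: "linear (refl a)"
  unfolding refl_def pair_def
  by (rule linearI) (auto simp: inner_add_left algebra_simps add_divide_distrib)

lemma refl_refl: "a \<noteq> 0 \<Longrightarrow> refl a (refl a x) = x"
  unfolding refl_def by (simp add: pair_diff pair_scale pair_self)

lemma refl_inner: "a \<noteq> 0 \<Longrightarrow> refl a x \<bullet> refl a y = x \<bullet> y"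
  unfolding refl_def pair_def
  by (simp add: inner_diff_left inner_diff_right field_simps inner_commute)

lemma pair_refl: "a \<noteq> 0 \<Longrightarrow> pair (refl a x) (refl a y) = pair x y"
  unfolding pair_def[of "refl a x"] pair_def[of x] by (simp add: refl_inner)


lemma rs_nz: "root_system R \<Longrightarrow> a \<in> R \<Longrightarrow> a \<noteq> 0"
  unfolding root_system_def by auto
lemma rs_refl: "root_system R \<Longrightarrow> a \<in> R \<Longrightarrow> b \<in> R \<Longrightarrow> refl a b \<in> R"
  unfolding root_system_def by auto
lemma rs_int: "root_system R \<Longrightarrow> a \<in> R \<Longrightarrow> b \<in> R \<Longrightarrow> pair b a \<in> \<int>"
  unfolding root_system_def by auto
lemma rs_neg: "root_system R \<Longrightarrow> a \<in> R \<Longrightarrow> - a \<in> R"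
proof -
  assume r: "root_system R" and a: "a \<in> R"
  have "refl a a = - a" using rs_nz[OF r a] unfolding refl_def by (simp add: pair_self scaleR_2)
  thus ?thesis using rs_refl[OF r a a] by simp
qed

lemma weyl_props:
  assumes r: "root_system R" and w: "w \<in> weyl_group R"
  shows "linear w \<and> (\<forall>x y. w x \<bullet> w y = x \<bullet> y) \<and> (\<forall>g\<in>R. w g \<in> R)
     \<and> (\<forall>g\<in>R. \<exists>d\<in>R. w d = g) \<and> inj w \<and> surj w"
  using w
proof induction
  case weyl_id
  then show ?case by (auto intro: linearI)
next
  case (weyl_step w a)
  have nz: "a \<noteq> 0" using rs_nz[OF r weyl_step(2)] .
  have "linear (refl a \<circ> w)" using weyl_step refl_linear linear_compose by blast
  moreover have "\<forall>x y. (refl a \<circ> w) x \<bullet> (refl a \<circ> w) y = x \<bullet> y"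
    using weyl_step refl_inner[OF nz] by simp
  moreover have "\<forall>g\<in>R. (refl a \<circ> w) g \<in> R" using weyl_step rs_refl[OF r] by simp
  moreover have "\<forall>g\<in>R. \<exists>d\<in>R. (refl a \<circ> w) d = g"
  proof
    fix g assume g: "g \<in> R"
    then obtain d where "d \<in> R" "w d = refl a g"
      using weyl_step rs_refl[OF r] by metis
    then have "refl a (w d) = g" using refl_refl[OF nz] by simp
    then show "\<exists>d\<in>R. (refl a \<circ> w) d = g" using \<open>d \<in> R\<close> by auto
  qed
  moreover have "inj (refl a)" by (metis injI refl_refl[OF nz])
  then have "inj (refl a \<circ> w)" using weyl_step inj_compose by blast
  moreover have "surj (refl a)" by (metis surjI refl_refl[OF nz])
  then have "surj (refl a \<circ> w)" using weyl_step comp_surj by blast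
  ultimately show ?case by blast
qed

lemma base_fin: "root_system R \<Longrightarrow> is_base R S \<Longrightarrow> finite S"
  unfolding root_system_def is_base_def by (auto intro: finite_subset)
lemma base_sub: "is_base R S \<Longrightarrow> S \<subseteq> R"
  unfolding is_base_def by auto
lemma base_indep: "is_base R S \<Longrightarrow> independent S"
  unfolding is_base_def by auto

lemma coeff_unique:
  assumes "finite S" "independent S" "(\<Sum>a\<in>S. c a *\<^sub>R a) = (\<Sum>a\<in>S. d a *\<^sub>R a)" "a \<in> S"
  shows "c a = d a"
proof -
  have "(\<Sum>a\<in>S. (c a - d a) *\<^sub>R a) = 0"
    using assms(3) by (simp add: scaleR_diff_left sum_subtractf)
  moreover have "\<forall>u. (\<forall>v\<in>S. u v = 0) \<or> (\<Sum>v\<in>S. u v *\<^sub>R v) \<noteq> 0"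
    using assms(1,2) dependent_finite[of S] by auto
  ultimately have "\<forall>v\<in>S. c v - d v = 0" by metis
  then show ?thesis using assms(4) by auto
qed

lemma pos_or_neg:
  assumes r: "root_system R" and b: "is_base R S" and g: "g \<in> R"
  shows "g \<in> pos_roots R S \<or> - g \<in> pos_roots R S"
proof -
  obtain c where c: "g = (\<Sum>a\<in>S. c a *\<^sub>R a)" "(\<forall>a\<in>S. c a \<in> \<nat>) \<or> (\<forall>a\<in>S. - c a \<in> \<nat>)"
    using b g unfolding is_base_def by blast
  show ?thesis
  proof (cases "\<forall>a\<in>S. c a \<in> \<nat>")
    case True then show ?thesis using c g unfolding pos_roots_def by blast
  next
    case False
    then have "\<forall>a\<in>S. - c a \<in> \<nat>" using c by blast
    moreover have "- g = (\<Sum>a\<in>S. (- c a) *\<^sub>R a)" using c by (simp add: sum_negf)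
    ultimately have "- g \<in> pos_roots R S" using rs_neg[OF r g] unfolding pos_roots_def
      by (intro CollectI conjI exI[of _ "\<lambda>a. - c a"]) auto
    then show ?thesis by blast
  qed
qed

lemma simple_pos:
  assumes r: "root_system R" and b: "is_base R S" and j: "j \<in> S"
  shows "j \<in> pos_roots R S"
proof -
  have "j = (\<Sum>a\<in>S. (if a = j then 1 else 0) *\<^sub>R a)"
    using j base_fin[OF r b] by (simp add: if_distrib[of "\<lambda>t. t *\<^sub>R _"] sum.delta cong: if_cong)
  moreover have "\<forall>a\<in>S. (if a = j then 1 else (0::real)) \<in> \<nat>" by auto
  ultimately show ?thesis using j base_sub[OF b] unfolding pos_roots_def
    by (intro CollectI conjI exI[of _ "\<lambda>a. if a = j then 1 else 0"]) auto
qed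


lemma root_in_span: "is_base R S \<Longrightarrow> g \<in> R \<Longrightarrow> g \<in> span S"
proof -
  assume b: "is_base R S" and g: "g \<in> R"
  obtain c where c: "g = (\<Sum>a\<in>S. c a *\<^sub>R a)" using b g unfolding is_base_def by blast
  show ?thesis unfolding c by (intro span_sum span_scale span_base)
qed

lemma span_base_UNIV: "root_system R \<Longrightarrow> is_base R S \<Longrightarrow> span S = UNIV"
proof -
  assume r: "root_system R" and b: "is_base R S"
  have "R \<subseteq> span S" using root_in_span[OF b] by blast
  then have "span R \<subseteq> span S" by (metis span_mono span_span)
  then show ?thesis using r unfolding root_system_def by auto
qed

lemma fund_weight_pair:
  assumes r: "root_system R" and b: "is_base R S"
  shows "\<forall>j\<in>S. pair (fund_weight S i) j = (if j = i then 1 else 0)"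
proof -
  let ?P = "\<lambda>w. \<forall>j\<in>S. pair w j = (if j = i then 1 else 0)"
  have nz: "\<And>j. j \<in> S \<Longrightarrow> j \<noteq> 0" using rs_nz[OF r] base_sub[OF b] by blast
  obtain g where g: "linear g" "\<forall>x\<in>S. g x = (if x = i then 1 else 0) * (x \<bullet> x) / (2::real)"
    using linear_independent_extend[OF base_indep[OF b], of "\<lambda>x. (if x = i then 1 else 0) * (x \<bullet> x) / (2::real)"]
    by blast
  define x where "x = (\<Sum>b\<in>Basis. g b *\<^sub>R b)"
  have xg: "x \<bullet> y = g y" for y
  proof -
    have "g y = g (\<Sum>b\<in>Basis. (y \<bullet> b) *\<^sub>R b)" by (subst euclidean_representation) (rule refl)
    also have "\<dots> = (\<Sum>b\<in>Basis. (y \<bullet> b) * g b)" using g(1) by (simp add: linear_sum linear_scale)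
    also have "\<dots> = x \<bullet> y" unfolding x_def inner_sum_left by (simp add: inner_commute mult.commute)
    finally show ?thesis by simp
  qed
  have Px: "?P x"
  proof
    fix j assume j: "j \<in> S"
    have "j \<bullet> j \<noteq> 0" using nz[OF j] by simp
    then show "pair x j = (if j = i then 1 else 0)" unfolding pair_def xg using g(2) j nz[OF j] by (cases "j = i") auto
  qed
  have uniq: "y = x" if Py: "?P y" for y
  proof -
    have "orthogonal (y - x) j" if j: "j \<in> S" for j
    proof -
      have "y \<bullet> j = x \<bullet> j" using inner_pair[OF nz[OF j], of y] inner_pair[OF nz[OF j], of x] Px Py j by simp
      then show ?thesis unfolding orthogonal_def by (simp add: inner_diff_left)
    qed
    then have "orthogonal (y - x) (y - x)"
      using orthogonal_to_span[of "y - x" S] span_base_UNIV[OF r b] by blast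
    then show ?thesis unfolding orthogonal_def by simp
  qed
  have "?P (THE w. ?P w)" by (rule theI[of ?P x, OF Px uniq])
  then show ?thesis unfolding fund_weight_def .
qed


lemma nat_nonneg: "(t::real) \<in> \<nat> \<Longrightarrow> 0 \<le> t"
  by (auto elim: Nats_cases)

lemma sum_delta_scale:
  fixes S :: "'a::real_vector set"
  assumes "finite S" "j \<in> S"
  shows "(\<Sum>a\<in>S. (if a = j then p else 0) *\<^sub>R a) = p *\<^sub>R j"
proof -
  have "(\<Sum>a\<in>S. (if a = j then p else 0) *\<^sub>R a) = (\<Sum>a\<in>S. if a = j then p *\<^sub>R j else 0)"
    by (rule sum.cong) auto
  also have "\<dots> = p *\<^sub>R j" using assms by (simp add: sum.delta)
  finally show ?thesis .
qed

lemma int_aux: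
  assumes r: "root_system R" and b: "is_base R S"
  shows "\<forall>\<beta> c x. \<beta> \<in> R \<and> \<beta> = (\<Sum>a\<in>S. c a *\<^sub>R a) \<and> (\<forall>a\<in>S. c a \<in> \<nat>) \<and> sum c S < real n
     \<and> (\<forall>j\<in>S. pair x j \<in> \<int>) \<longrightarrow> pair x \<beta> \<in> \<int>"
proof (induction n)
  case 0
  show ?case
  proof (intro allI impI)
    fix \<beta> c x assume H: "\<beta> \<in> R \<and> \<beta> = (\<Sum>a\<in>S. c a *\<^sub>R a) \<and> (\<forall>a\<in>S. c a \<in> \<nat>) \<and> sum c S < real 0
     \<and> (\<forall>j\<in>S. pair x j \<in> \<int>)"
    have "0 \<le> sum c S" using H nat_nonneg by (intro sum_nonneg) auto
    then show "pair x \<beta> \<in> \<int>" using H by simp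
  qed
next
  case (Suc n)
  have fin: "finite S" using base_fin[OF r b] .
  have SR: "S \<subseteq> R" using base_sub[OF b] .
  show ?case
  proof (intro allI impI)
    fix \<beta> c x assume H: "\<beta> \<in> R \<and> \<beta> = (\<Sum>a\<in>S. c a *\<^sub>R a) \<and> (\<forall>a\<in>S. c a \<in> \<nat>) \<and> sum c S < real (Suc n)
     \<and> (\<forall>j\<in>S. pair x j \<in> \<int>)"
    then have bR: "\<beta> \<in> R" and bc: "\<beta> = (\<Sum>a\<in>S. c a *\<^sub>R a)" and cN: "\<forall>a\<in>S. c a \<in> \<nat>"
      and cs: "sum c S < real (Suc n)" and xI: "\<forall>j\<in>S. pair x j \<in> \<int>" by auto
    have c0: "\<forall>a\<in>S. 0 \<le> c a" using cN nat_nonneg by blast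
    have bnz: "\<beta> \<noteq> 0" using rs_nz[OF r bR] .
    have "\<beta> \<bullet> \<beta> = (\<Sum>a\<in>S. c a * (a \<bullet> \<beta>))"
      by (subst (1) bc) (simp add: inner_sum_left)
    moreover have "\<beta> \<bullet> \<beta> > 0" using bnz by simp
    ultimately obtain j where j: "j \<in> S" "c j > 0" "j \<bullet> \<beta> > 0"
    proof -
      assume *: "\<And>j. j \<in> S \<Longrightarrow> 0 < c j \<Longrightarrow> 0 < j \<bullet> \<beta> \<Longrightarrow> thesis"
      have False if "\<forall>j\<in>S. \<not> (c j > 0 \<and> j \<bullet> \<beta> > 0)"
      proof -
        have "(\<Sum>a\<in>S. c a * (a \<bullet> \<beta>)) \<le> 0"
        proof (rule sum_nonpos)
          fix a assume a: "a \<in> S"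
          show "c a * (a \<bullet> \<beta>) \<le> 0"
            using that a c0 by (metis less_eq_real_def mult_nonneg_nonpos mult_zero_left not_le)
        qed
        then show False using \<open>\<beta> \<bullet> \<beta> = _\<close> \<open>\<beta> \<bullet> \<beta> > 0\<close> by linarith
      qed
      then show thesis using * by blast
    qed
    have jR: "j \<in> R" using SR j(1) by blast
    have jnz: "j \<noteq> 0" using rs_nz[OF r jR] .
    define p where "p = pair \<beta> j"
    have pI: "p \<in> \<int>" unfolding p_def using rs_int[OF r jR bR] .
    have "p > 0" unfolding p_def pair_def using j(3) jnz by (simp add: inner_commute)
    then have p1: "p \<ge> 1" using pI by (auto elim!: Ints_cases)
    show "pair x \<beta> \<in> \<int>"
    proof (cases "\<beta> = j")
      case True then show ?thesis using xI j(1) by simp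
    next
      case False
      define \<beta>' where "\<beta>' = refl j \<beta>"
      have b'R: "\<beta>' \<in> R" unfolding \<beta>'_def using rs_refl[OF r jR bR] .
      define c' where "c' = (\<lambda>a. c a - (if a = j then p else 0))"
      have b'c: "\<beta>' = (\<Sum>a\<in>S. c' a *\<^sub>R a)"
        unfolding \<beta>'_def refl_def c'_def
        by (simp add: scaleR_diff_left sum_subtractf sum_delta_scale[OF fin j(1)] bc[symmetric] p_def)
      obtain d where d: "\<beta>' = (\<Sum>a\<in>S. d a *\<^sub>R a)" "(\<forall>a\<in>S. d a \<in> \<nat>) \<or> (\<forall>a\<in>S. - d a \<in> \<nat>)"
        using b and b'R unfolding is_base_def by blast
      have dc: "\<forall>a\<in>S. d a = c' a"
        using coeff_unique[OF fin base_indep[OF b]] d(1) b'c by metis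
      obtain k where k: "k \<in> S" "k \<noteq> j" "c k > 0"
      proof -
        assume *: "\<And>k. k \<in> S \<Longrightarrow> k \<noteq> j \<Longrightarrow> 0 < c k \<Longrightarrow> thesis"
        have False if nk: "\<forall>k\<in>S. k \<noteq> j \<longrightarrow> \<not> c k > 0"
        proof -
          have "\<beta> = (\<Sum>a\<in>S. (if a = j then c j else 0) *\<^sub>R a)"
            unfolding bc by (rule sum.cong) (use nk c0 in force)+
          then have bj: "\<beta> = c j *\<^sub>R j" using sum_delta_scale[OF fin j(1)] by simp
          then have "c j = 1 \<or> c j = -1" using r jR bR unfolding root_system_def by metis
          then have "c j = 1" using j(2) by auto
          then show False using bj False by simp
        qed
        then show thesis using * by blast
      qed
      have "\<not> (\<forall>a\<in>S. - d a \<in> \<nat>)"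
      proof
        assume "\<forall>a\<in>S. - d a \<in> \<nat>"
        then have "0 \<le> - d k" using k(1) nat_nonneg by blast
        moreover have "d k = c k" using dc k unfolding c'_def by simp
        ultimately show False using k(3) by simp
      qed
      then have c'N: "\<forall>a\<in>S. c' a \<in> \<nat>" using d(2) dc by auto
      have "sum c' S = sum c S - p"
        unfolding c'_def using fin j(1) by (simp add: sum_subtractf sum.delta)
      then have c's: "sum c' S < real n" using cs p1 by simp
      define x' where "x' = refl j x"
      have x'I: "\<forall>k\<in>S. pair x' k \<in> \<int>"
      proof
        fix k assume kS: "k \<in> S"
        have "pair x' k = pair x k - pair x j * pair j k"
          unfolding x'_def refl_def by (simp add: pair_diff pair_scale)
        moreover have "pair j k \<in> \<int>" using rs_int[OF r _ jR] SR kS by blast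
        ultimately show "pair x' k \<in> \<int>" using xI kS j(1) by simp
      qed
      have "pair x' \<beta>' \<in> \<int>" using Suc.IH b'R b'c c'N c's x'I by blast
      moreover have "pair x \<beta> = pair x' \<beta>'"
        unfolding x'_def \<beta>'_def using pair_refl[OF jnz] by simp
      ultimately show ?thesis by simp
    qed
  qed
qed

lemma integral_root:
  assumes r: "root_system R" and b: "is_base R S" and xI: "\<forall>j\<in>S. pair x j \<in> \<int>" and g: "g \<in> R"
  shows "pair x g \<in> \<int>"
proof -
  have pos: "pair x h \<in> \<int>" if h: "h \<in> pos_roots R S" for h
  proof -
    obtain c where c: "h \<in> R" "h = (\<Sum>a\<in>S. c a *\<^sub>R a)" "\<forall>a\<in>S. c a \<in> \<nat>"
      using h unfolding pos_roots_def by blast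
    have "sum c S < real (nat \<lceil>sum c S\<rceil> + 1)" by linarith
    then show ?thesis using int_aux[OF r b, of "nat \<lceil>sum c S\<rceil> + 1"] c xI by blast
  qed
  show ?thesis
  proof (cases "g \<in> pos_roots R S")
    case True then show ?thesis using pos by blast
  next
    case False
    then have "- g \<in> pos_roots R S" using pos_or_neg[OF r b g] by blast
    then have "pair x (- g) \<in> \<int>" using pos by blast
    then show ?thesis by (simp add: pair_uminus_right)
  qed
qed


lemma pos_lower:
  assumes r: "root_system R" and b: "is_base R S" and h: "h \<in> pos_roots R S" and i: "i \<in> S"
    and x: "\<forall>a\<in>S. 0 \<le> pair x a"
  shows "0 \<le> pair (fund_weight S i) h \<and> pair (fund_weight S i) h * pair x i \<le> pair x h"
proof -
  obtain c where c: "h \<in> R" "h = (\<Sum>a\<in>S. c a *\<^sub>R a)" "\<forall>a\<in>S. c a \<in> \<nat>"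
    using h unfolding pos_roots_def by blast
  have fin: "finite S" using base_fin[OF r b] .
  have nz: "\<And>a. a \<in> S \<Longrightarrow> a \<noteq> 0" using rs_nz[OF r] base_sub[OF b] by blast
  have hnz: "h \<noteq> 0" using rs_nz[OF r c(1)] .
  define k where "k a = c a * (a \<bullet> a) / (h \<bullet> h)" for a
  have k0: "\<forall>a\<in>S. 0 \<le> k a" using c(3) nat_nonneg unfolding k_def by auto
  have form: "pair y h = (\<Sum>a\<in>S. k a * pair y a)" for y
  proof -
    have "y \<bullet> h = (\<Sum>a\<in>S. c a * (y \<bullet> a))"
      by (subst c(2)) (simp add: inner_sum_right)
    also have "\<dots> = (\<Sum>a\<in>S. c a * (pair y a * (a \<bullet> a) / 2))"
      by (rule sum.cong[OF refl]) (metis inner_pair nz)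
    finally have "y \<bullet> h = (\<Sum>a\<in>S. c a * (pair y a * (a \<bullet> a) / 2))" .
    then have "pair y h = (\<Sum>a\<in>S. 2 * (c a * (pair y a * (a \<bullet> a) / 2)) / (h \<bullet> h))"
      unfolding pair_def[of y h] by (simp only: sum_distrib_left sum_divide_distrib)
    also have "\<dots> = (\<Sum>a\<in>S. k a * pair y a)"
      unfolding k_def using hnz by (intro sum.cong[OF refl]) (simp add: field_simps)
    finally show ?thesis .
  qed
  let ?w = "fund_weight S i"
  have "pair ?w h = (\<Sum>a\<in>S. if a = i then k i else 0)"
    unfolding form[of ?w] using fund_weight_pair[OF r b, of i] by (intro sum.cong) auto
  then have wh: "pair ?w h = k i" using fin i by (simp add: sum.delta)
  have "k i * pair x i \<le> (\<Sum>a\<in>S. k a * pair x a)"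
    by (rule member_le_sum) (use i fin k0 x in auto)
  then show ?thesis using wh form[of x] k0 i by simp
qed


lemma absxy: "\<bar>(y::real) - x\<bar> \<le> \<bar>x + y\<bar> \<Longrightarrow> 0 \<le> x * y"
  by (cases "0 \<le> x"; cases "0 \<le> y") (auto simp: abs_if split: if_splits intro: mult_nonneg_nonneg mult_nonpos_nonpos)
lemma xy0: "0 \<le> (x::real) * y \<Longrightarrow> 0 \<le> x + y \<Longrightarrow> 0 \<le> x"
  by (smt (verit) mult_neg_pos)
lemma xy0': "0 \<le> (x::real) * y \<Longrightarrow> 0 \<le> x + y \<Longrightarrow> 0 \<le> y"
  by (smt (verit) mult_pos_neg)

theorem proposition5p4:
  fixes R S :: "'a::euclidean_space set" and l l1 l2 m1 m2 :: 'a
    and w :: "'a \<Rightarrow> 'a" and i0 :: 'a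
  assumes "root_system R" and "irreducible_rs R" and "is_base R S"
    and "dominant S l"
    and "(l1, l2) \<in> P2 S l" and "(m1, m2) \<in> P2 S l"
    and "prec R S (l1, l2) (m1, m2)"
    and "w \<in> weyl_group R" and "i0 \<in> S"
    and "dominant S (w (l1 - l2))"
    and "pair (w (l1 - m1)) i0 * pair (w (m1 - l2)) i0 > 0"
  shows "(l1 - inv w (fund_weight S i0), l2 + inv w (fund_weight S i0)) \<in> P2 S l
    \<and> prec R S (l1, l2) (l1 - inv w (fund_weight S i0), l2 + inv w (fund_weight S i0))
    \<and> preceq R S (l1 - inv w (fund_weight S i0), l2 + inv w (fund_weight S i0)) (m1, m2)"
proof -
  have r: "root_system R" and b: "is_base R S" and i0: "i0 \<in> S" using assms by auto
  have SR: "S \<subseteq> R" using base_sub[OF b] .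
  have PR: "pos_roots R S \<subseteq> R" unfolding pos_roots_def by auto
  have i0R: "i0 \<in> R" using SR i0 by blast
  have wp: "linear w \<and> (\<forall>x y. w x \<bullet> w y = x \<bullet> y) \<and> (\<forall>g\<in>R. w g \<in> R)
     \<and> (\<forall>g\<in>R. \<exists>d\<in>R. w d = g) \<and> inj w \<and> surj w" using weyl_props[OF r assms(8)] .
  then have wlin: "linear w" and wi: "\<And>x y. w x \<bullet> w y = x \<bullet> y" and wR: "\<And>g. g \<in> R \<Longrightarrow> w g \<in> R"
    and wsR: "\<And>g. g \<in> R \<Longrightarrow> \<exists>d\<in>R. w d = g" and winj: "inj w" and wsurj: "surj w" by auto
  have wiv: "w (inv w y) = y" for y using wsurj by (simp add: surj_f_inv_f)
  have ivw: "inv w (w x) = x" for x using winj by simp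
  have pw: "pair (w x) (w y) = pair x y" for x y unfolding pair_def wi ..
  have ivR: "inv w g \<in> R" if g: "g \<in> R" for g
  proof -
    obtain d where "d \<in> R" "w d = g" using wsR[OF g] by blast
    then show ?thesis using ivw by metis
  qed
  have wadd: "w (x + y) = w x + w y" for x y using linear_add[OF wlin] .
  have wneg: "w (- x) = - w x" for x using linear_neg[OF wlin] .
  define \<omega> where "\<omega> = fund_weight S i0"
  have h\<omega>: "\<forall>j\<in>S. pair \<omega> j = (if j = i0 then 1 else 0)" unfolding \<omega>_def using fund_weight_pair[OF r b] .
  define u where "u = inv w \<omega>"
  define A where "A = l1 - m1"
  define B where "B = m1 - l2"
  have dl1: "dominant S l1" and dl2: "dominant S l2" and sl: "l1 + l2 = l"
    using assms(5) unfolding P2_def by auto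
  have dm1: "dominant S m1" and dm2: "dominant S m2" and sm: "m1 + m2 = l"
    using assms(6) unfolding P2_def by auto
  define X where "X g = pair (w A) g" for g
  define Y where "Y g = pair (w B) g" for g
  define C where "C g = pair \<omega> g" for g
  have XYC_neg: "X (- g) = - X g" "Y (- g) = - Y g" "C (- g) = - C g" for g
    unfolding X_def Y_def C_def by (simp_all add: pair_uminus_right)
  have d1: "l1 - l2 = A + B" unfolding A_def B_def by simp
  have "m2 = l1 + l2 - m1" using sl sm by (simp add: algebra_simps)
  then have d2: "m1 - m2 = B - A" unfolding A_def B_def by (simp add: algebra_simps)
  have d3: "(l1 - u) - (l2 + u) = A + B - 2 *\<^sub>R u" unfolding A_def B_def by (simp add: scaleR_2 algebra_simps)
  have rel1: "pair (l1 - l2) \<alpha> = X (w \<alpha>) + Y (w \<alpha>)" for \<alpha>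
    unfolding d1 X_def Y_def pair_add pw ..
  have rel2: "pair (m1 - m2) \<alpha> = Y (w \<alpha>) - X (w \<alpha>)" for \<alpha>
    unfolding d2 X_def Y_def pair_diff pw ..
  have rel3: "pair ((l1 - u) - (l2 + u)) \<alpha> = X (w \<alpha>) + Y (w \<alpha>) - 2 * C (w \<alpha>)" for \<alpha>
  proof -
    have "pair u \<alpha> = C (w \<alpha>)" unfolding C_def u_def using pw[of "inv w \<omega>" \<alpha>] wiv by simp
    then show ?thesis unfolding d3 pair_diff pair_add pair_scale X_def Y_def pw by simp
  qed
  have pm1: "pmin (l1, l2) \<alpha> = (pair l \<alpha> - \<bar>X (w \<alpha>) + Y (w \<alpha>)\<bar>) / 2" for \<alpha>
    using pmin_eq[of l1 l2 \<alpha>] rel1 sl by simp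
  have pm2: "pmin (m1, m2) \<alpha> = (pair l \<alpha> - \<bar>Y (w \<alpha>) - X (w \<alpha>)\<bar>) / 2" for \<alpha>
    using pmin_eq[of m1 m2 \<alpha>] rel2 sm by simp
  have pm3: "pmin (l1 - u, l2 + u) \<alpha> = (pair l \<alpha> - \<bar>X (w \<alpha>) + Y (w \<alpha>) - 2 * C (w \<alpha>)\<bar>) / 2" for \<alpha>
  proof -
    have "(l1 - u) + (l2 + u) = l" using sl by simp
    then show ?thesis using pmin_eq[of "l1 - u" "l2 + u" \<alpha>] rel3 by simp
  qed
  have pre: "preceq R S (l1, l2) (m1, m2)" using assms(7) unfolding prec_def by simp
  have XYpos: "0 \<le> X (w \<alpha>) * Y (w \<alpha>)" if a: "\<alpha> \<in> pos_roots R S" for \<alpha>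
  proof -
    have "pmin (l1, l2) \<alpha> \<le> pmin (m1, m2) \<alpha>" using pre a unfolding preceq_def by blast
    then have "\<bar>Y (w \<alpha>) - X (w \<alpha>)\<bar> \<le> \<bar>X (w \<alpha>) + Y (w \<alpha>)\<bar>" unfolding pm1 pm2 by simp
    then show ?thesis by (rule absxy)
  qed
  have XY0: "0 \<le> X g * Y g" if g: "g \<in> R" for g
  proof -
    define \<alpha> where "\<alpha> = inv w g"
    have aR: "\<alpha> \<in> R" unfolding \<alpha>_def using ivR[OF g] .
    have wa: "w \<alpha> = g" unfolding \<alpha>_def using wiv .
    show ?thesis
    proof (cases "\<alpha> \<in> pos_roots R S")
      case True then show ?thesis using XYpos wa by metis
    next
      case False
      then have "- \<alpha> \<in> pos_roots R S" using pos_or_neg[OF r b aR] by blast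
      then have "0 \<le> X (w (- \<alpha>)) * Y (w (- \<alpha>))" by (rule XYpos)
      then show ?thesis unfolding wneg wa XYC_neg by simp
    qed
  qed
  have wl: "w (l1 - l2) = w A + w B" unfolding d1 wadd ..
  have Sn: "0 \<le> X a \<and> 0 \<le> Y a" if a: "a \<in> S" for a
  proof -
    have "pair (w (l1 - l2)) a \<in> \<nat>" using assms(10) a unfolding dominant_def by blast
    then have "0 \<le> X a + Y a" unfolding X_def Y_def using nat_nonneg wl pair_add by metis
    moreover have "0 \<le> X a * Y a" using XY0 SR a by blast
    ultimately show ?thesis using xy0 xy0' by blast
  qed
  have AI: "\<forall>j\<in>S. pair A j \<in> \<int>"
  proof
    fix j assume j: "j \<in> S"
    have "pair l1 j \<in> \<nat>" "pair m1 j \<in> \<nat>" using dl1 dm1 j unfolding dominant_def by auto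
    then show "pair A j \<in> \<int>" unfolding A_def pair_diff using Nats_subset_Ints by (intro Ints_diff) auto
  qed
  have BI: "\<forall>j\<in>S. pair B j \<in> \<int>"
  proof
    fix j assume j: "j \<in> S"
    have "pair m1 j \<in> \<nat>" "pair l2 j \<in> \<nat>" using dm1 dl2 j unfolding dominant_def by auto
    then show "pair B j \<in> \<int>" unfolding B_def pair_diff using Nats_subset_Ints by (intro Ints_diff) auto
  qed
  have \<omega>I: "\<forall>j\<in>S. pair \<omega> j \<in> \<int>" using h\<omega> by simp
  have XI: "X i0 \<in> \<int>"
  proof -
    have "X i0 = pair A (inv w i0)" unfolding X_def using pw[of A "inv w i0"] wiv by simp
    then show ?thesis using integral_root[OF r b AI ivR[OF i0R]] by simp
  qed
  have YI: "Y i0 \<in> \<int>"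
  proof -
    have "Y i0 = pair B (inv w i0)" unfolding Y_def using pw[of B "inv w i0"] wiv by simp
    then show ?thesis using integral_root[OF r b BI ivR[OF i0R]] by simp
  qed
  have XYi0: "X i0 * Y i0 > 0" using assms(11) unfolding X_def Y_def A_def B_def .
  have X1: "X i0 \<ge> 1" and Y1: "Y i0 \<ge> 1"
  proof -
    have "X i0 \<noteq> 0" "Y i0 \<noteq> 0" using XYi0 by auto
    then have "X i0 > 0" "Y i0 > 0" using Sn[OF i0] by auto
    then show "X i0 \<ge> 1" "Y i0 \<ge> 1" using XI YI by (auto elim!: Ints_cases)
  qed
  have Ci0: "C i0 = 1" unfolding C_def using h\<omega> i0 by simp
  have posb: "0 \<le> C g \<and> C g \<le> X g \<and> C g \<le> Y g" if g: "g \<in> pos_roots R S" for g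
  proof -
    have "0 \<le> C g \<and> C g * X i0 \<le> X g"
      using pos_lower[OF r b g i0, of "w A"] Sn unfolding C_def X_def \<omega>_def by blast
    moreover have "0 \<le> C g \<and> C g * Y i0 \<le> Y g"
      using pos_lower[OF r b g i0, of "w B"] Sn unfolding C_def Y_def \<omega>_def by blast
    moreover have "C g \<le> C g * X i0" "C g \<le> C g * Y i0" if "0 \<le> C g"
      using X1 Y1 that by (simp_all add: mult_le_cancel_left1)
    ultimately show ?thesis by linarith
  qed
  have key: "\<bar>Y g - X g\<bar> \<le> \<bar>X g + Y g - 2 * C g\<bar> \<and> \<bar>X g + Y g - 2 * C g\<bar> \<le> \<bar>X g + Y g\<bar>"
    if g: "g \<in> R" for g
  proof (cases "g \<in> pos_roots R S")
    case True
    then show ?thesis using posb[OF True] by (simp add: abs_if)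
  next
    case False
    then have ng: "- g \<in> pos_roots R S" using pos_or_neg[OF r b g] by blast
    then show ?thesis using posb[OF ng] unfolding XYC_neg by (simp add: abs_if)
  qed
  have strict: "\<bar>X g + Y g - 2 * C g\<bar> < \<bar>X g + Y g\<bar>" if "g = i0 \<or> g = - i0" for g
    using that X1 Y1 Ci0 XYC_neg by (auto simp: abs_if)
  have both: "pmin (l1, l2) \<alpha> \<le> pmin (l1 - u, l2 + u) \<alpha> \<and> pmin (l1 - u, l2 + u) \<alpha> \<le> pmin (m1, m2) \<alpha>"
    if a: "\<alpha> \<in> pos_roots R S" for \<alpha>
  proof -
    have "w \<alpha> \<in> R" using wR PR a by blast
    from key[OF this] show ?thesis unfolding pm1 pm2 pm3 by simp
  qed
  have G3: "preceq R S (l1 - u, l2 + u) (m1, m2)" unfolding preceq_def using both by blast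
  have G2a: "preceq R S (l1, l2) (l1 - u, l2 + u)" unfolding preceq_def using both by blast
  have G2b: "\<not> simeq R S (l1, l2) (l1 - u, l2 + u)"
  proof
    assume sim: "simeq R S (l1, l2) (l1 - u, l2 + u)"
    define \<alpha> where "\<alpha> = inv w i0"
    have aR: "\<alpha> \<in> R" unfolding \<alpha>_def using ivR[OF i0R] .
    have wa: "w \<alpha> = i0" unfolding \<alpha>_def using wiv .
    obtain \<beta> where bp: "\<beta> \<in> pos_roots R S" and wb: "w \<beta> = i0 \<or> w \<beta> = - i0"
      using pos_or_neg[OF r b aR] wa wneg by metis
    have "pmin (l1, l2) \<beta> = pmin (l1 - u, l2 + u) \<beta>" using sim bp unfolding simeq_def by blast
    then have "\<bar>X (w \<beta>) + Y (w \<beta>) - 2 * C (w \<beta>)\<bar> = \<bar>X (w \<beta>) + Y (w \<beta>)\<bar>" unfolding pm1 pm3 by simp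
    then show False using strict[OF wb] by simp
  qed
  have dom1: "dominant S (l1 - u)" and dom2: "dominant S (l2 + u)"
  proof -
    have "pair (l1 - u) j \<in> \<nat> \<and> pair (l2 + u) j \<in> \<nat>" if j: "j \<in> S" for j
    proof -
      have jR: "j \<in> R" using SR j by blast
      have "pair u j = pair \<omega> (w j)" unfolding u_def using pw[of "inv w \<omega>" j] wiv by simp
      then have uI: "pair u j \<in> \<int>" using integral_root[OF r b \<omega>I wR[OF jR]] by simp
      have l1I: "pair l1 j \<in> \<nat>" and l2I: "pair l2 j \<in> \<nat>" using dl1 dl2 j unfolding dominant_def by auto
      have jp: "j \<in> pos_roots R S" using simple_pos[OF r b j] .
      have "pmin (l1, l2) j \<le> pmin (l1 - u, l2 + u) j" using both[OF jp] by blast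
      moreover have "0 \<le> pmin (l1, l2) j" unfolding pmin_def using l1I l2I nat_nonneg by simp
      ultimately have "0 \<le> pair (l1 - u) j" "0 \<le> pair (l2 + u) j" unfolding pmin_def by auto
      moreover have "pair (l1 - u) j \<in> \<int>" "pair (l2 + u) j \<in> \<int>"
        unfolding pair_diff pair_add using uI l1I l2I Nats_subset_Ints by (auto intro!: Ints_diff Ints_add)
      ultimately show ?thesis by (simp add: Nats_altdef2)
    qed
    then show "dominant S (l1 - u)" "dominant S (l2 + u)" unfolding dominant_def by auto
  qed
  have G1: "(l1 - u, l2 + u) \<in> P2 S l" unfolding P2_def using dom1 dom2 sl by simp
  show ?thesis using G1 G2a G2b G3 unfolding prec_def u_def \<omega>_def by blast
qed

end
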